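(* Let $\mu$ and $\nu$ be probability measures on $\mathbb{R}$ and let $n\ge1$ be an integer. If $m_{2n}(\mu)<\infty$ and $m_{2n}(\nu)<\infty$, then $m_{2n}(\mu\rhd\nu)<\infty$, and for $1\le l\le 2n$, $$m_l(\mu\rhd\nu)=m_l(\mu)+m_l(\nu)+\sum_{k=1}^{l-1}\ \sum_{\substack{j_0+j_1+\cdots+j_k=l-k\\ j_p\ge0,\ 0\le p\le k}} m_k(\mu)\,m_{j_0}(\nu)\cdots m_{j_k}(\nu).$$
   Context: $m_k(\mu):=\int_{\mathbb{R}}x^k\,\mu(dx)$ denotes the $k$-th moment (so $m_0=1$). For a probability measure $\mu$, $G_\mu(z)=\int\frac{1}{z-x}d\mu(x)$ on $\mathbb{C}^+$ and $H_\mu=1/G_\mu$; the monotone convolution $\mu\rhd\nu$ is the unique probability measure with $H_{\mu\rhd\nu}=H_\mu\circ H_\nu$. *)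

theory Defs
  imports "HOL-Probability.Probability"
begin

definition real_prob_measure :: "real measure \<Rightarrow> bool" where
  "real_prob_measure M \<longleftrightarrow> prob_space M \<and> sets M = sets borel"

definition moment :: "real measure \<Rightarrow> nat \<Rightarrow> real" where
  "moment M k = integral\<^sup>L M (\<lambda>x. x ^ k)"

definition cauchy_transform :: "real measure \<Rightarrow> complex \<Rightarrow> complex" where
  "cauchy_transform M z = integral\<^sup>L M (\<lambda>x. 1 / (z - complex_of_real x))"

definition F_transform :: "real measure \<Rightarrow> complex \<Rightarrow> complex" where
  "F_transform M z = 1 / cauchy_transform M z"

text \<open>rho is the monotone convolution of mu and nu: the (unique) probability
  measure with H_rho = H_mu o H_nu on the upper half plane.\<close>
definition is_monotone_convolution :: "real measure \<Rightarrow> real measure \<Rightarrow> real measure \<Rightarrow> bool" where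
  "is_monotone_convolution \<mu> \<nu> \<rho> \<longleftrightarrow> real_prob_measure \<rho> \<and>
     (\<forall>z. Im z > 0 \<longrightarrow> F_transform \<rho> z = F_transform \<mu> (F_transform \<nu> z))"

end

theory Submission
  imports Defs "HOL-Computational_Algebra.Polynomial"
begin


definition LS :: "nat \<Rightarrow> nat \<Rightarrow> nat list set" where
  "LS m d = {js. length js = m \<and> sum_list js = d}"

lemma LS_finite: "finite (LS m d)"
proof (rule finite_subset)
  show "LS m d \<subseteq> {xs. set xs \<subseteq> {..d} \<and> length xs = m}"
    unfolding LS_def using member_le_sum_list by fastforce
  show "finite {xs. set xs \<subseteq> {..d} \<and> length xs = m}"
    by (rule finite_lists_length_eq) simp
qed

lemma LS_Suc: "LS (Suc m) d = (\<lambda>(i, js). i # js) ` (SIGMA i:{..d}. LS m (d - i))"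
proof
  show "LS (Suc m) d \<subseteq> (\<lambda>(i, js). i # js) ` (SIGMA i:{..d}. LS m (d - i))"
  proof
    fix xs assume "xs \<in> LS (Suc m) d"
    then obtain i js where xs: "xs = i # js" "length js = m" "i + sum_list js = d"
      unfolding LS_def by (auto simp: length_Suc_conv)
    then show "xs \<in> (\<lambda>(i, js). i # js) ` (SIGMA i:{..d}. LS m (d - i))"
      unfolding LS_def by (intro image_eqI[of _ _ "(i, js)"]) auto
  qed
  show "(\<lambda>(i, js). i # js) ` (SIGMA i:{..d}. LS m (d - i)) \<subseteq> LS (Suc m) d"
    unfolding LS_def by auto
qed

lemma coeff_power_lists:
  fixes p :: "'a::comm_semiring_1 poly"
  shows "coeff (p^m) d = (\<Sum>js\<in>LS m d. prod_list (map (coeff p) js))"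
proof (induction m arbitrary: d)
  case 0
  have "LS 0 d = (if d = 0 then {[]} else {})" unfolding LS_def by auto
  then show ?case by simp
next
  case (Suc m)
  have inj: "inj_on (\<lambda>(i, js). i # js) (SIGMA i:{..d}. LS m (d - i))"
    by (auto simp: inj_on_def)
  have "coeff (p^Suc m) d = (\<Sum>i\<le>d. coeff p i * coeff (p^m) (d - i))"
    by (simp add: coeff_mult)
  also have "\<dots> = (\<Sum>i\<le>d. \<Sum>js\<in>LS m (d - i). coeff p i * prod_list (map (coeff p) js))"
    by (simp add: Suc sum_distrib_left)
  also have "\<dots> = (\<Sum>(i, js)\<in>(SIGMA i:{..d}. LS m (d - i)). coeff p i * prod_list (map (coeff p) js))"
    by (rule sum.Sigma) (auto simp: LS_finite)
  also have "\<dots> = (\<Sum>xs\<in>LS (Suc m) d. prod_list (map (coeff p) xs))"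
    unfolding LS_Suc by (subst sum.reindex[OF inj]) (auto intro!: sum.cong)
  finally show ?case .
qed

lemma of_real_prod_list: "complex_of_real (prod_list xs) = prod_list (map complex_of_real xs)"
  by (induction xs) auto

definition Qp :: "nat \<Rightarrow> (nat \<Rightarrow> real) \<Rightarrow> complex poly" where
  "Qp N nu = (\<Sum>j\<le>N. monom (complex_of_real (nu j)) j)"

definition Rp :: "nat \<Rightarrow> (nat \<Rightarrow> real) \<Rightarrow> (nat \<Rightarrow> real) \<Rightarrow> complex poly" where
  "Rp N mu nu = (\<Sum>k\<le>N. smult (complex_of_real (mu k)) (monom 1 (k+1) * (Qp N nu)^(k+1)))"

lemma coeff_R:
  fixes mu nu :: "nat \<Rightarrow> real" and N :: nat
  defines "Q \<equiv> Qp N nu" and "R \<equiv> Rp N mu nu"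
  shows "coeff R 0 = 0"
    and "l \<le> N \<Longrightarrow> coeff R (l+1) = of_real (\<Sum>k\<le>l. mu k * (\<Sum>js\<in>LS (Suc k) (l-k). prod_list (map nu js)))"
proof -
  have cQ: "coeff Q j = (if j \<le> N then complex_of_real (nu j) else 0)" for j
    unfolding Q_def Qp_def by (simp add: coeff_sum coeff_monom)
  show "coeff R 0 = 0" unfolding R_def Rp_def by (simp add: coeff_sum coeff_monom_mult)
  assume l: "l \<le> N"
  have "coeff R (l+1) = (\<Sum>k\<le>N. complex_of_real (mu k) * (if l+1 < k+1 then 0 else coeff (Q^(k+1)) (l+1-(k+1))))"
    unfolding R_def Rp_def Q_def[symmetric] coeff_sum coeff_smult coeff_monom_mult by (intro sum.cong refl) simp
  also have "\<dots> = (\<Sum>k\<le>l. complex_of_real (mu k) * coeff (Q^(k+1)) (l-k))"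
  proof -
    have un: "{..N} = {..l} \<union> {l<..N}" using l by auto
    have "(\<Sum>k\<le>N. complex_of_real (mu k) * (if l+1 < k+1 then 0 else coeff (Q^(k+1)) (l+1-(k+1))))
      = (\<Sum>k\<le>l. complex_of_real (mu k) * (if l+1 < k+1 then 0 else coeff (Q^(k+1)) (l+1-(k+1))))
      + (\<Sum>k\<in>{l<..N}. complex_of_real (mu k) * (if l+1 < k+1 then 0 else coeff (Q^(k+1)) (l+1-(k+1))))"
      unfolding un by (rule sum.union_disjoint) auto
    also have "(\<Sum>k\<in>{l<..N}. complex_of_real (mu k) * (if l+1 < k+1 then 0 else coeff (Q^(k+1)) (l+1-(k+1)))) = 0"
      by (rule sum.neutral) auto
    finally show ?thesis by simp
  qed
  also have "\<dots> = (\<Sum>k\<le>l. complex_of_real (mu k) * complex_of_real (\<Sum>js\<in>LS (Suc k) (l-k). prod_list (map nu js)))"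
  proof (rule sum.cong[OF refl])
    fix k assume k: "k \<in> {..l}"
    have "coeff (Q^(k+1)) (l-k) = (\<Sum>js\<in>LS (Suc k) (l-k). prod_list (map (coeff Q) js))"
      using coeff_power_lists[of Q "Suc k" "l-k"] by simp
    also have "\<dots> = (\<Sum>js\<in>LS (Suc k) (l-k). complex_of_real (prod_list (map nu js)))"
    proof (rule sum.cong[OF refl])
      fix js assume js: "js \<in> LS (Suc k) (l-k)"
      have "\<forall>j\<in>set js. j \<le> N"
        using js l member_le_sum_list[of _ js] unfolding LS_def by fastforce
      then have "map (coeff Q) js = map complex_of_real (map nu js)"
        by (simp add: cQ map_eq_conv)
      then show "prod_list (map (coeff Q) js) = complex_of_real (prod_list (map nu js))"
        by (simp only: of_real_prod_list)
    qed
    finally show "complex_of_real (mu k) * coeff (Q^(k+1)) (l-k) = complex_of_real (mu k) * complex_of_real (\<Sum>js\<in>LS (Suc k) (l-k). prod_list (map nu js))"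
      by simp
  qed
  finally show "coeff R (l+1) = of_real (\<Sum>k\<le>l. mu k * (\<Sum>js\<in>LS (Suc k) (l-k). prod_list (map nu js)))"
    by simp
qed

lemma LS_one: "LS (Suc 0) l = {[l]}"
  unfolding LS_def by (auto simp: length_Suc_conv)

lemma LS_zero: "LS n 0 = {replicate n 0}"
proof
  show "LS n 0 \<subseteq> {replicate n 0}"
  proof
    fix xs assume "xs \<in> LS n 0"
    then have "length xs = n" "\<forall>x\<in>set xs. x = 0" unfolding LS_def by auto
    then show "xs \<in> {replicate n 0}" using replicate_length_same[of xs 0] by auto
  qed
  show "{replicate n 0} \<subseteq> LS n 0" unfolding LS_def by auto
qed

lemma final_formula:
  fixes mu nu :: "nat \<Rightarrow> real"
  assumes mu0: "mu 0 = 1" and nu0: "nu 0 = 1" and l: "1 \<le> l"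
  shows "(\<Sum>k\<le>l. mu k * (\<Sum>js\<in>LS (Suc k) (l-k). prod_list (map nu js)))
    = mu l + nu l + (\<Sum>k = 1..l - 1. \<Sum>js\<in>{js. length js = Suc k \<and> sum_list js = l - k}. mu k * prod_list (map nu js))"
proof -
  obtain l' where l': "l = Suc l'" using l by (cases l) auto
  define F where "F k = mu k * (\<Sum>js\<in>LS (Suc k) (l-k). prod_list (map nu js))" for k
  have "(\<Sum>k\<le>l. F k) = F 0 + (\<Sum>k=1..l. F k)"
    by (simp add: atMost_atLeast0 sum.atLeast_Suc_atMost)
  also have "(\<Sum>k=1..l. F k) = (\<Sum>k=1..l'. F k) + F l"
    unfolding l' by simp
  finally have s: "(\<Sum>k\<le>l. F k) = F 0 + (\<Sum>k=1..l'. F k) + F l" by simp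
  have F0: "F 0 = nu l" unfolding F_def LS_one using mu0 by simp
  have Fl: "F l = mu l" unfolding F_def using nu0 by (simp add: LS_zero)
  have mid: "(\<Sum>k=1..l'. F k) = (\<Sum>k = 1..l - 1. \<Sum>js\<in>{js. length js = Suc k \<and> sum_list js = l - k}. mu k * prod_list (map nu js))"
    unfolding F_def LS_def l' by (simp add: sum_distrib_left)
  show ?thesis using s F0 Fl mid unfolding F_def by simp
qed



lemma geom_rem:
  fixes w x :: complex
  assumes "w \<noteq> 0" "w \<noteq> x"
  shows "1/(w-x) - (\<Sum>k\<le>N. x^k / w^(k+1)) = x^(N+1) / (w^(N+1) * (w-x))"
proof (induction N)
  case 0
  then show ?case using assms by (simp add: field_simps)
next
  case (Suc N)
  have "1/(w-x) - (\<Sum>k\<le>Suc N. x^k / w^(k+1)) = x^(N+1) / (w^(N+1) * (w-x)) - x^(Suc N)/w^(Suc N+1)"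
    using Suc by simp
  also have "\<dots> = x^(Suc N+1) / (w^(Suc N+1) * (w-x))"
    using assms by (simp add: field_simps)
  finally show ?case .
qed

lemma rpm_finite: "real_prob_measure M \<Longrightarrow> prob_space M"
  by (simp add: real_prob_measure_def)

lemma rpm_meas[measurable_cong]: "real_prob_measure M \<Longrightarrow> sets M = sets borel"
  by (simp add: real_prob_measure_def)

lemma moment_integrable:
  assumes M: "real_prob_measure M" and I: "integrable M (\<lambda>x. x ^ (2*n))" and k: "k \<le> 2*n"
  shows "integrable M (\<lambda>x::real. x ^ k)"
proof (rule Bochner_Integration.integrable_bound[where f="\<lambda>x. 1 + x^(2*n)"])
  interpret prob_space M using M by (simp add: real_prob_measure_def)
  show "integrable M (\<lambda>x. 1 + x^(2*n))" using I by simp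
  show "(\<lambda>x. x ^ k) \<in> borel_measurable M"
    by (subst measurable_cong_sets[OF rpm_meas[OF M] refl]) simp
  show "AE x in M. norm (x ^ k) \<le> norm (1 + x ^ (2 * n))"
  proof (rule AE_I2)
    fix x :: real
    have e: "x^(2*n) = \<bar>x\<bar>^(2*n)" by (simp add: power_mult power_even_abs)
    have "\<bar>x\<bar>^k \<le> 1 + \<bar>x\<bar>^(2*n)"
    proof (cases "\<bar>x\<bar> \<le> 1")
      case True then have "\<bar>x\<bar>^k \<le> 1" by (simp add: power_le_one)
      moreover have "0 \<le> \<bar>x\<bar>^(2*n)" by simp
      ultimately show ?thesis by linarith
    next
      case False then have "\<bar>x\<bar>^k \<le> \<bar>x\<bar>^(2*n)" by (intro power_increasing k) auto
      then show ?thesis by simp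
    qed
    then show "norm (x ^ k) \<le> norm (1 + x ^ (2 * n))" using e by (simp add: power_abs)
  qed
qed

lemma cauchy_integrable:
  assumes M: "real_prob_measure M" and w: "Im w > 0"
  shows "integrable M (\<lambda>x. 1 / (w - complex_of_real x))"
proof (rule Bochner_Integration.integrable_bound[where f="\<lambda>x. 1 / Im w"])
  interpret prob_space M using M by (simp add: real_prob_measure_def)
  show "integrable M (\<lambda>x. 1 / Im w)" by simp
  show "(\<lambda>x. 1 / (w - complex_of_real x)) \<in> borel_measurable M"
    by (subst measurable_cong_sets[OF rpm_meas[OF M] refl]) measurable
  show "AE x in M. norm (1 / (w - complex_of_real x)) \<le> norm (1 / Im w)"
  proof (rule AE_I2)
    fix x :: real
    have "Im w \<le> cmod (w - complex_of_real x)"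
      using abs_Im_le_cmod[of "w - complex_of_real x"] by simp
    then show "norm (1 / (w - complex_of_real x)) \<le> norm (1 / Im w)"
      using w by (simp add: norm_divide frac_le)
  qed
qed

lemma norm_sub_real_ge: "Im w \<le> cmod (w - complex_of_real x)"
  using abs_Im_le_cmod[of "w - complex_of_real x"] by simp

lemma forward_eq:
  assumes M: "real_prob_measure M" and I: "integrable M (\<lambda>x. x^(2*n))" and v: "Im v > 0"
  shows "(cauchy_transform M v - (\<Sum>k\<le>2*n. of_real (moment M k) / v^(k+1))) * v^(2*n+1)
      = integral\<^sup>L M (\<lambda>x. complex_of_real x ^ (2*n+1) / (v - complex_of_real x))"
proof -
  have v0: "v \<noteq> 0" using v by auto
  have vx: "v \<noteq> complex_of_real x" for x using v by auto
  have ik: "integrable M (\<lambda>x. complex_of_real x ^ k / v^(k+1))" if "k \<le> (2*n)" for k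
  proof -
    have "integrable M (\<lambda>x. x^k)" using moment_integrable[OF M I] that by simp
    from integrable_divide[OF integrable_of_real[OF this], of "v^(k+1)"] show ?thesis by simp
  qed
  have "(\<Sum>k\<le>(2*n). of_real (moment M k) / v^(k+1)) = (\<Sum>k\<le>(2*n). integral\<^sup>L M (\<lambda>x. complex_of_real x ^ k / v^(k+1)))"
    by (simp add: moment_def flip: integral_complex_of_real)
  also have "\<dots> = integral\<^sup>L M (\<lambda>x. \<Sum>k\<le>(2*n). complex_of_real x ^ k / v^(k+1))"
    by (rule Bochner_Integration.integral_sum[where f="\<lambda>k x. complex_of_real x ^ k / v^(k+1)", symmetric]) (use ik in auto)
  finally have s: "(\<Sum>k\<le>(2*n). of_real (moment M k) / v^(k+1)) = integral\<^sup>L M (\<lambda>x. \<Sum>k\<le>(2*n). complex_of_real x ^ k / v^(k+1))" .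
  have "cauchy_transform M v - (\<Sum>k\<le>(2*n). of_real (moment M k) / v^(k+1))
    = integral\<^sup>L M (\<lambda>x. 1 / (v - complex_of_real x) - (\<Sum>k\<le>(2*n). complex_of_real x ^ k / v^(k+1)))"
    unfolding s cauchy_transform_def
    by (rule Bochner_Integration.integral_diff[symmetric]) (use cauchy_integrable[OF M v] ik in auto)
  also have "\<dots> = integral\<^sup>L M (\<lambda>x. (complex_of_real x ^ ((2*n)+1) / (v - complex_of_real x)) / v^((2*n)+1))"
    by (rule Bochner_Integration.integral_cong[OF refl], subst geom_rem[OF v0 vx]) (simp add: field_simps)
  also have "\<dots> = integral\<^sup>L M (\<lambda>x. complex_of_real x ^ ((2*n)+1) / (v - complex_of_real x)) / v^((2*n)+1)"
    by (rule integral_divide_zero)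
  finally show ?thesis using v0 by simp
qed

lemma forward:
  fixes w :: "real \<Rightarrow> complex"
  assumes M: "real_prob_measure M" and I: "integrable M (\<lambda>x. x^(2*n))"
    and lim: "filterlim (\<lambda>y. Im (w y)) at_top at_top"
    and cone: "eventually (\<lambda>y. norm (w y) \<le> C * Im (w y)) at_top"
  shows "((\<lambda>y. (cauchy_transform M (w y) - (\<Sum>k\<le>2*n. of_real (moment M k) / (w y)^(k+1))) * (w y)^(2*n+1)) \<longlongrightarrow> 0) at_top"
proof -
  interpret prob_space M using M by (simp add: real_prob_measure_def)
  have meas: "sets M = sets borel" using M by (simp add: real_prob_measure_def)
  define N where "N = 2*n"
  have pos: "eventually (\<lambda>y. Im (w y) > 0) at_top"
    using lim unfolding filterlim_at_top_dense by auto
  have eq: "(cauchy_transform M v - (\<Sum>k\<le>N. of_real (moment M k) / v^(k+1))) * v^(N+1)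
      = integral\<^sup>L M (\<lambda>x. complex_of_real x ^ (N+1) / (v - complex_of_real x))" if v: "Im v > 0" for v
    using forward_eq[OF M I v] unfolding N_def .
  have lim0: "((\<lambda>y. integral\<^sup>L M (\<lambda>x. complex_of_real x ^ (N+1) / (w y - complex_of_real x))) \<longlongrightarrow> integral\<^sup>L M (\<lambda>x. 0)) at_top"
  proof (rule integral_dominated_convergence_at_top[where w="\<lambda>x. (1 + C) * x^N"])
    show "(\<lambda>x. 0::complex) \<in> borel_measurable M" by simp
    show "(\<lambda>x. complex_of_real x ^ (N+1) / (w t - complex_of_real x)) \<in> borel_measurable M" for t
      by (subst measurable_cong_sets[OF meas refl]) measurable
    show "integrable M (\<lambda>x. (1 + C) * x^N)" using I unfolding N_def by simp
    show "AE x in M. ((\<lambda>y. complex_of_real x ^ (N+1) / (w y - complex_of_real x)) \<longlongrightarrow> 0) at_top"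
    proof (rule AE_I2)
      fix x :: real
      have l: "((\<lambda>y. \<bar>x\<bar>^(N+1) / Im (w y)) \<longlongrightarrow> 0) at_top"
        by (rule tendsto_divide_0[OF tendsto_const filterlim_at_top_imp_at_infinity[OF lim]])
      show "((\<lambda>y. complex_of_real x ^ (N+1) / (w y - complex_of_real x)) \<longlongrightarrow> 0) at_top"
      proof (rule Lim_null_comparison[OF _ l])
        show "\<forall>\<^sub>F y in at_top. norm (complex_of_real x ^ (N+1) / (w y - complex_of_real x)) \<le> \<bar>x\<bar>^(N+1) / Im (w y)"
          using pos
        proof eventually_elim
          case (elim y)
          have d: "Im (w y) \<le> cmod (w y - complex_of_real x)" by (rule norm_sub_real_ge)
          have "norm (complex_of_real x ^ (N+1) / (w y - complex_of_real x)) = \<bar>x\<bar>^(N+1) / cmod (w y - complex_of_real x)"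
            by (simp only: norm_divide norm_power norm_of_real)
          also have "\<dots> \<le> \<bar>x\<bar>^(N+1) / Im (w y)"
            by (rule divide_left_mono[OF d]) (use elim d in \<open>auto intro!: mult_pos_pos\<close>)
          finally show ?case .
        qed
      qed
    qed
    show "\<forall>\<^sub>F y in at_top. AE x in M. norm (complex_of_real x ^ (N+1) / (w y - complex_of_real x)) \<le> (1 + C) * x^N"
      using pos cone
    proof eventually_elim
      case (elim y)
      show ?case
      proof (rule AE_I2)
        fix x :: real
        let ?d = "cmod (w y - complex_of_real x)"
        have d: "Im (w y) \<le> ?d" by (rule norm_sub_real_ge)
        have dpos: "?d > 0" using d elim by linarith
        have "\<bar>x\<bar> = cmod (complex_of_real x)" by simp
        also have "\<dots> \<le> ?d + cmod (w y)" using norm_triangle_sub[of "complex_of_real x" "w y"]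
          by (simp add: norm_minus_commute)
        also have "\<dots> \<le> ?d + C * ?d"
          using elim d mult_left_mono[OF d, of C] by (smt (verit) norm_ge_zero mult_nonneg_nonneg zero_le_mult_iff)
        finally have xd: "\<bar>x\<bar> \<le> (1 + C) * ?d" by (simp add: algebra_simps)
        have xN: "x^N = \<bar>x\<bar>^N" unfolding N_def by (simp add: power_mult power_even_abs)
        have "norm (complex_of_real x ^ (N+1) / (w y - complex_of_real x)) = \<bar>x\<bar>^N * (\<bar>x\<bar> / ?d)"
          by (simp only: norm_divide norm_power norm_of_real power_Suc2 Suc_eq_plus1[symmetric]) (simp add: norm_mult norm_power)
        also have "\<dots> \<le> \<bar>x\<bar>^N * (1 + C)"
          using xd dpos by (intro mult_left_mono) (simp_all add: divide_le_eq)
        finally show "norm (complex_of_real x ^ (N+1) / (w y - complex_of_real x)) \<le> (1 + C) * x^N"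
          by (simp add: xN mult.commute)
      qed
    qed
  qed
  have "eventually (\<lambda>y. integral\<^sup>L M (\<lambda>x. complex_of_real x ^ (N+1) / (w y - complex_of_real x))
      = (cauchy_transform M (w y) - (\<Sum>k\<le>N. of_real (moment M k) / (w y)^(k+1))) * (w y)^(N+1)) at_top"
    using pos by eventually_elim (rule eq[symmetric])
  from tendsto_cong[OF this] lim0 show ?thesis unfolding N_def by simp
qed

definition Exp :: "(real \<Rightarrow> complex) \<Rightarrow> (nat \<Rightarrow> real) \<Rightarrow> nat \<Rightarrow> bool" where
  "Exp f a N \<longleftrightarrow> ((\<lambda>y. (f y - (\<Sum>k\<le>N. of_real (a k) / (\<i> * of_real y)^(k+1))) * (\<i> * of_real y)^(N+1)) \<longlongrightarrow> 0) at_top"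

lemma inv_i_0: "((\<lambda>y::real. 1 / (\<i> * complex_of_real y)) \<longlongrightarrow> 0) at_top"
proof -
  have "((\<lambda>y::real. - \<i> * complex_of_real (inverse y)) \<longlongrightarrow> - \<i> * complex_of_real 0) at_top"
    by (intro tendsto_intros tendsto_inverse_0_at_top filterlim_ident)
  moreover have "(\<lambda>y::real. - \<i> * complex_of_real (inverse y)) = (\<lambda>y. 1 / (\<i> * complex_of_real y))"
    by (rule ext) (simp add: divide_complex_def)
  ultimately show ?thesis by simp
qed

lemma inv_pow0: "d \<ge> 1 \<Longrightarrow> ((\<lambda>y::real. 1 / (\<i> * complex_of_real y)^d) \<longlongrightarrow> 0) at_top"
proof -
  assume d: "d \<ge> 1"
  have "((\<lambda>y::real. (1 / (\<i> * complex_of_real y))^d) \<longlongrightarrow> 0^d) at_top"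
    by (intro tendsto_power inv_i_0)
  then show ?thesis using d by (simp add: power_one_over zero_power)
qed

lemma inv_pow_conv: "\<exists>c. ((\<lambda>y::real. 1 / (\<i> * complex_of_real y)^d) \<longlongrightarrow> c) at_top"
proof (cases "d = 0")
  case True then show ?thesis by auto
next
  case False then show ?thesis using inv_pow0[of d] by auto
qed

lemma Exp_trunc:
  assumes E: "Exp f a N" and MN: "M \<le> N"
  shows "Exp f a M"
proof -
  let ?z = "\<lambda>y::real. \<i> * complex_of_real y"
  let ?S = "\<lambda>K y. (\<Sum>k\<le>K. complex_of_real (a k) / (?z y)^(k+1))"
  let ?T = "\<lambda>y. (\<Sum>k\<in>{M<..N}. complex_of_real (a k) / (?z y)^(k+1))"
  have e: "eventually (\<lambda>y. (f y - ?S M y) * (?z y)^(M+1) =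
      ((f y - ?S N y) * (?z y)^(N+1)) * (1 / (?z y)^(N-M))
      + (\<Sum>k\<in>{M<..N}. complex_of_real (a k) * (1 / (?z y)^(k-M)))) at_top"
    using eventually_gt_at_top[of "0::real"]
  proof eventually_elim
    case (elim y)
    then have z: "?z y \<noteq> 0" by simp
    have un: "{..N} = {..M} \<union> {M<..N}" using MN by auto
    have split: "?S N y = ?S M y + ?T y"
      unfolding un by (rule sum.union_disjoint) auto
    have p1: "(?z y)^(N+1) * (1 / (?z y)^(N-M)) = (?z y)^(M+1)"
    proof -
      have "(?z y)^(N+1) = (?z y)^(N-M) * (?z y)^(M+1)"
        unfolding power_add[symmetric] using MN by (simp add: Suc_diff_le)
      then show ?thesis using z by simp
    qed
    have p2: "complex_of_real (a k) / (?z y)^(k+1) * (?z y)^(M+1) = complex_of_real (a k) * (1 / (?z y)^(k-M))"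
      if "k \<in> {M<..N}" for k
    proof -
      have "(?z y)^(k+1) = (?z y)^(k-M) * (?z y)^(M+1)"
        unfolding power_add[symmetric] using that by (simp add: Suc_diff_le)
      then show ?thesis using z by simp
    qed
    have sT: "(\<Sum>k\<in>{M<..N}. complex_of_real (a k) * (1 / (?z y)^(k-M)))
       = (\<Sum>k\<in>{M<..N}. complex_of_real (a k) / (?z y)^(k+1) * (?z y)^(M+1))"
      by (rule sum.cong[OF refl], rule p2[symmetric])
    have "((f y - ?S N y) * (?z y)^(N+1)) * (1 / (?z y)^(N-M))
      + (\<Sum>k\<in>{M<..N}. complex_of_real (a k) * (1 / (?z y)^(k-M)))
      = (f y - ?S N y) * ((?z y)^(N+1) * (1 / (?z y)^(N-M)))
      + (\<Sum>k\<in>{M<..N}. complex_of_real (a k) / (?z y)^(k+1) * (?z y)^(M+1))"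
      by (simp only: mult.assoc sT)
    also have "\<dots> = (f y - ?S N y) * (?z y)^(M+1) + ?T y * (?z y)^(M+1)"
      by (simp only: p1 sum_distrib_right)
    also have "\<dots> = (f y - ?S M y) * (?z y)^(M+1)"
      unfolding split by (simp add: algebra_simps)
    finally show ?case by simp
  qed
  obtain c where c: "((\<lambda>y::real. 1 / (?z y)^(N-M)) \<longlongrightarrow> c) at_top" using inv_pow_conv by blast
  have l1: "((\<lambda>y. ((f y - ?S N y) * (?z y)^(N+1)) * (1 / (?z y)^(N-M))) \<longlongrightarrow> 0 * c) at_top"
    by (intro tendsto_mult c) (use E in \<open>simp add: Exp_def\<close>)
  have l2: "((\<lambda>y. \<Sum>k\<in>{M<..N}. complex_of_real (a k) * (1 / (?z y)^(k-M))) \<longlongrightarrow> (\<Sum>k\<in>{M<..N}. complex_of_real (a k) * 0)) at_top"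
    by (intro tendsto_sum tendsto_mult tendsto_const inv_pow0) auto
  have l3: "((\<lambda>y. ((f y - ?S N y) * (?z y)^(N+1)) * (1 / (?z y)^(N-M))
      + (\<Sum>k\<in>{M<..N}. complex_of_real (a k) * (1 / (?z y)^(k-M)))) \<longlongrightarrow> 0) at_top"
    using tendsto_add[OF l1 l2] by simp
  have "((\<lambda>y. (f y - ?S M y) * (?z y)^(M+1)) \<longlongrightarrow> 0) at_top"
    by (rule Lim_transform_eventually[OF l3]) (rule eventually_mono[OF e], rule sym)
  then show ?thesis unfolding Exp_def .
qed

lemma Exp_unique:
  assumes A: "Exp f a N" and B: "Exp f b N"
  shows "k \<le> N \<Longrightarrow> a k = b k"
proof (induction k rule: less_induct)
  case (less k)
  let ?z = "\<lambda>y::real. \<i> * complex_of_real y"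
  have Ak: "Exp f a k" and Bk: "Exp f b k" using Exp_trunc A B less.prems by auto
  have IH: "\<And>j. j < k \<Longrightarrow> a j = b j" using less by auto
  have e: "eventually (\<lambda>y. (f y - (\<Sum>j\<le>k. of_real (b j) / (?z y)^(j+1))) * (?z y)^(k+1)
      - (f y - (\<Sum>j\<le>k. of_real (a j) / (?z y)^(j+1))) * (?z y)^(k+1) = complex_of_real (a k - b k)) at_top"
    using eventually_gt_at_top[of "0::real"]
  proof eventually_elim
    case (elim y)
    then have z: "?z y \<noteq> 0" by simp
    have s: "(\<Sum>j\<le>k. of_real (c j) / (?z y)^(j+1)) = (\<Sum>j<k. of_real (c j) / (?z y)^(j+1)) + of_real (c k) / (?z y)^(k+1)" for c
      by (simp add: lessThan_Suc_atMost[symmetric])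
    have eq: "(\<Sum>j<k. of_real (b j) / (?z y)^(j+1)) = (\<Sum>j<k. of_real (a j) / (?z y)^(j+1))"
      using IH by (intro sum.cong) auto
    define B where "B = (\<Sum>j<k. of_real (a j) / (?z y)^(j+1))"
    define Z where "Z = (?z y)^(k+1)"
    have Z: "Z \<noteq> 0" using z unfolding Z_def by simp
    have "(f y - (B + of_real (b k) / Z)) * Z - (f y - (B + of_real (a k) / Z)) * Z
       = (of_real (a k) - of_real (b k)) / Z * Z"
      by (simp add: algebra_simps diff_divide_distrib)
    also have "\<dots> = complex_of_real (a k - b k)" using Z by simp
    finally show ?case unfolding s[of a] s[of b] eq B_def[symmetric] Z_def[symmetric] .
  qed
  have L: "((\<lambda>y. (f y - (\<Sum>j\<le>k. of_real (b j) / (?z y)^(j+1))) * (?z y)^(k+1)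
      - (f y - (\<Sum>j\<le>k. of_real (a j) / (?z y)^(j+1))) * (?z y)^(k+1)) \<longlongrightarrow> 0 - 0) at_top"
    using Ak Bk unfolding Exp_def by (intro tendsto_diff)
  have "((\<lambda>y::real. complex_of_real (a k - b k)) \<longlongrightarrow> 0 - 0) at_top"
    using Lim_transform_eventually[OF L e] .
  then have "complex_of_real (a k - b k) = 0" using tendsto_const_iff[where a="complex_of_real (a k - b k)" and b="0 - 0" and F="at_top::real filter"] by simp
  then show ?case by simp
qed

lemma forward_Exp:
  assumes M: "real_prob_measure M" and I: "integrable M (\<lambda>x. x^(2*n))"
  shows "Exp (\<lambda>y. cauchy_transform M (\<i> * complex_of_real y)) (moment M) (2*n)"
proof -
  have c: "eventually (\<lambda>y::real. norm (\<i> * complex_of_real y) \<le> 1 * Im (\<i> * complex_of_real y)) at_top"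
    by (rule eventually_mono[OF eventually_ge_at_top[of 0]]) (simp add: norm_mult)
  have l: "filterlim (\<lambda>y::real. Im (\<i> * complex_of_real y)) at_top at_top"
    by (simp add: filterlim_ident)
  show ?thesis using forward[OF M I l c] unfolding Exp_def by simp
qed

lemma moments_eq:
  assumes M: "real_prob_measure M" and E: "Exp (\<lambda>y. cauchy_transform M (\<i> * complex_of_real y)) a N"
    and I: "integrable M (\<lambda>x. x^(2*m))" and mN: "2*m \<le> N" and k: "k \<le> 2*m"
  shows "moment M k = a k"
  using Exp_unique[OF forward_Exp[OF M I] Exp_trunc[OF E mN] k] .

lemma Im_g: "Im (\<i> * complex_of_real y * (complex_of_real x ^ k / (\<i> * complex_of_real y - complex_of_real x)))
   = - (x^k * x * y / (x^2 + y^2))"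
proof -
  have h: "\<And>r z. Im (complex_of_real r * z) = r * Im z" by simp
  have "\<i> * complex_of_real y * (complex_of_real x ^ k / (\<i> * complex_of_real y - complex_of_real x))
    = complex_of_real (x^k) * ((\<i> * complex_of_real y) / (\<i> * complex_of_real y - complex_of_real x))"
    by simp
  also have "Im \<dots> = x^k * Im ((\<i> * complex_of_real y) / (\<i> * complex_of_real y - complex_of_real x))"
    by (rule h)
  also have "Im ((\<i> * complex_of_real y) / (\<i> * complex_of_real y - complex_of_real x)) = - (x * y) / (x^2 + y^2)"
    by (simp add: Im_divide cmod_power2)
  finally show ?thesis by simp
qed

lemma frac_id:
  fixes x p :: real
  assumes "0 < p"
  shows "p^2 / (x^2 + p^2) = 1 - x^2 / (x^2 + p^2)"
proof -
  have pp: "x^2 + p^2 > 0" using assms by (simp add: add_nonneg_pos)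
  have "(x^2+p^2)/(x^2+p^2) = 1" using pp by (intro divide_self) linarith
  moreover have "(x^2+p^2)/(x^2+p^2) = x^2/(x^2+p^2) + p^2/(x^2+p^2)" by (rule add_divide_distrib)
  ultimately show ?thesis by linarith
qed

lemma frac_mono:
  fixes x p q :: real
  assumes "0 < p" "p \<le> q"
  shows "p^2 / (x^2 + p^2) \<le> q^2 / (x^2 + q^2)"
proof -
  have pp: "x^2 + p^2 > 0" using assms by (simp add: add_nonneg_pos)
  have qq: "x^2 + q^2 > 0" using assms by (simp add: add_nonneg_pos)
  have e1: "p^2 / (x^2 + p^2) = 1 - x^2 / (x^2 + p^2)"
  proof -
    have "(x^2+p^2)/(x^2+p^2) = 1" using pp by (intro divide_self) linarith
    moreover have "(x^2+p^2)/(x^2+p^2) = x^2/(x^2+p^2) + p^2/(x^2+p^2)" by (rule add_divide_distrib)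
    ultimately show ?thesis by linarith
  qed
  have e2: "q^2 / (x^2 + q^2) = 1 - x^2 / (x^2 + q^2)"
  proof -
    have "(x^2+q^2)/(x^2+q^2) = 1" using qq by (intro divide_self) linarith
    moreover have "(x^2+q^2)/(x^2+q^2) = x^2/(x^2+q^2) + q^2/(x^2+q^2)" by (rule add_divide_distrib)
    ultimately show ?thesis by linarith
  qed
  have "p^2 \<le> q^2" using assms by (simp add: power_mono)
  then have "x^2 / (x^2 + q^2) \<le> x^2 / (x^2 + p^2)"
    by (intro divide_left_mono mult_pos_pos pp qq) auto
  then show ?thesis unfolding e1 e2 by simp
qed

lemma converse_int:
  assumes M: "real_prob_measure M" and E: "Exp (\<lambda>y. cauchy_transform M (\<i> * complex_of_real y)) a (2*n)"
  shows "m \<le> n \<Longrightarrow> integrable M (\<lambda>x. x^(2*m))"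
proof (induction m)
  case 0
  interpret prob_space M using M by (simp add: real_prob_measure_def)
  show ?case by simp
next
  case (Suc m)
  interpret prob_space M using M by (simp add: real_prob_measure_def)
  have meas: "sets M = sets borel" using M by (simp add: real_prob_measure_def)
  have I: "integrable M (\<lambda>x. x^(2*m))" using Suc by simp
  have eqm: "\<And>k. k \<le> 2*m \<Longrightarrow> moment M k = a k"
    using moments_eq[OF M E I] Suc.prems by simp
  define b where "b = a (2*m+2)"
  define A1 where "A1 = a (2*m+1)"
  define g where "g y x = (\<i> * complex_of_real y) * (complex_of_real x ^ (2*m+1) / (\<i> * complex_of_real y - complex_of_real x))" for y x
  define f where "f y x = x^(2*m+2) * (y^2 / (x^2 + y^2))" for y x :: real
  define R where "R y = (cauchy_transform M (\<i> * complex_of_real y) - (\<Sum>k\<le>2*m+2. of_real (a k) / (\<i> * complex_of_real y)^(k+1))) * (\<i> * complex_of_real y)^(2*m+2+1)" for y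
  have gint: "integrable M (g y)" if y: "y > 0" for y
  proof (rule Bochner_Integration.integrable_bound[where f="\<lambda>x. y * x^(2*m)"])
    show "integrable M (\<lambda>x. y * x^(2*m))" using I by simp
    show "g y \<in> borel_measurable M" unfolding g_def
      by (subst measurable_cong_sets[OF meas refl]) measurable
    show "AE x in M. norm (g y x) \<le> norm (y * x^(2*m))"
    proof (rule AE_I2)
      fix x :: real
      have d: "\<bar>x\<bar> \<le> cmod (\<i> * complex_of_real y - complex_of_real x)"
        using abs_Re_le_cmod[of "\<i> * complex_of_real y - complex_of_real x"] by simp
      have xN: "x^(2*m) = \<bar>x\<bar>^(2*m)" by (simp add: power_mult power_even_abs)
      show "norm (g y x) \<le> norm (y * x^(2*m))"
      proof (cases "x = 0")
        case True then show ?thesis by (simp add: g_def)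
      next
        case False
        then have dp: "cmod (\<i> * complex_of_real y - complex_of_real x) > 0" using d by linarith
        have "norm (g y x) = y * (\<bar>x\<bar>^(2*m) * (\<bar>x\<bar> / cmod (\<i> * complex_of_real y - complex_of_real x)))"
          unfolding g_def using y by (simp add: norm_mult norm_divide norm_power)
        also have "\<dots> \<le> y * (\<bar>x\<bar>^(2*m) * 1)"
          using d dp y by (intro mult_left_mono) (simp_all add: divide_le_eq)
        finally show ?thesis using y xN by (simp add: abs_mult)
      qed
    qed
  qed
  have fg: "f y x = - y * Im (g y x)" if "y > 0" for y x
    unfolding f_def g_def Im_g using that
    by (simp add: field_simps power2_eq_square)
  have fint: "integrable M (f y)" and fI: "integral\<^sup>L M (f y) = - y * Im (integral\<^sup>L M (g y))" if y: "y > 0" for y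
  proof -
    have e: "f y = (\<lambda>x. - y * Im (g y x))" using fg[OF y] by auto
    show "integrable M (f y)" unfolding e using gint[OF y] by simp
    have "integral\<^sup>L M (\<lambda>x. - y * Im (g y x)) = - y * integral\<^sup>L M (\<lambda>x. Im (g y x))" by simp
    also have "integral\<^sup>L M (\<lambda>x. Im (g y x)) = Im (integral\<^sup>L M (g y))"
      by (rule integral_bounded_linear[OF bounded_linear_Im gint[OF y]])
    finally show "integral\<^sup>L M (f y) = - y * Im (integral\<^sup>L M (g y))" unfolding e .
  qed
  have gI: "integral\<^sup>L M (g y) = (\<i> * complex_of_real y) * ((cauchy_transform M (\<i> * complex_of_real y) - (\<Sum>k\<le>2*m. of_real (a k) / (\<i> * complex_of_real y)^(k+1))) * (\<i> * complex_of_real y)^(2*m+1))"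
    if y: "y > 0" for y
  proof -
    have v: "Im (\<i> * complex_of_real y) > 0" using y by simp
    have s: "(\<Sum>k\<le>2*m. of_real (moment M k) / (\<i> * complex_of_real y)^(k+1)) = (\<Sum>k\<le>2*m. of_real (a k) / (\<i> * complex_of_real y)^(k+1))"
      using eqm by (intro sum.cong) auto
    have "integral\<^sup>L M (g y) = (\<i> * complex_of_real y) * integral\<^sup>L M (\<lambda>x. complex_of_real x ^ (2*m+1) / (\<i> * complex_of_real y - complex_of_real x))"
      unfolding g_def by (rule integral_mult_right_zero)
    then show ?thesis using forward_eq[OF M I v] s by simp
  qed
  have alg: "- y * Im (integral\<^sup>L M (g y)) = Re (R y) + b" if y: "y > 0" for y
  proof -
    define v where "v = \<i> * complex_of_real y"
    define G where "G = cauchy_transform M v"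
    define S0 where "S0 = (\<Sum>k\<le>2*m. of_real (a k) / v^(k+1))"
    define P where "P = v^(2*m+1)"
    have v0: "v \<noteq> 0" using y by (simp add: v_def)
    have P0: "P \<noteq> 0" using v0 by (simp add: P_def)
    have S2: "(\<Sum>k\<le>2*m+2. of_real (a k) / v^(k+1)) = S0 + of_real A1 / (v * P) + of_real b / (v * v * P)"
      by (simp add: S0_def A1_def b_def P_def numeral_2_eq_2 algebra_simps)
    have R: "R y = (G - (S0 + of_real A1 / (v * P) + of_real b / (v * v * P))) * (v * v * P)"
      unfolding R_def v_def[symmetric] G_def[symmetric] S2 by (simp add: P_def algebra_simps numeral_3_eq_3)
    have "integral\<^sup>L M (g y) = v * ((G - S0) * P)"
      using gI[OF y] by (simp add: v_def G_def S0_def P_def)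
    also have "\<dots> = R y / v + of_real A1 + of_real b / v"
      unfolding R using v0 P0 by (simp add: field_simps)
    finally have gi: "integral\<^sup>L M (g y) = R y / v + of_real A1 + of_real b / v" .
    show ?thesis unfolding gi v_def using y
      by (simp add: Im_divide field_simps power2_eq_square)
  qed
  have Rlim: "(R \<longlongrightarrow> 0) at_top"
  proof -
    have "Exp (\<lambda>y. cauchy_transform M (\<i> * complex_of_real y)) a (2*m+2)"
      by (rule Exp_trunc[OF E]) (use Suc.prems in simp)
    then show ?thesis unfolding Exp_def R_def by simp
  qed
  have flim: "((\<lambda>y. integral\<^sup>L M (f y)) \<longlongrightarrow> b) at_top"
  proof -
    have "((\<lambda>y. Re (R y) + b) \<longlongrightarrow> Re 0 + b) at_top"
      by (intro tendsto_intros Rlim)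
    then have l: "((\<lambda>y. Re (R y) + b) \<longlongrightarrow> b) at_top" by simp
    have ev: "Re (R y) + b = integral\<^sup>L M (f y)" if y: "y > 0" for y
      unfolding fI[OF y] alg[OF y] ..
    show ?thesis
      by (rule Lim_transform_eventually[OF l], rule eventually_mono[OF eventually_gt_at_top[of 0]])
         (rule ev)
  qed
  define s where "s i = 1 + real i" for i :: nat
  have s_top: "filterlim s at_top sequentially"
    unfolding s_def by (rule filterlim_tendsto_add_at_top[OF tendsto_const filterlim_real_sequentially])
  have spos: "s i > 0" for i by (simp add: s_def)
  have "integrable M (\<lambda>x. x^(2*m+2))"
  proof (rule integral_monotone_convergence_nonneg[where f="\<lambda>i. f (s i)" and x=b])
    show "integrable M (f (s i))" for i using fint[OF spos] .
    show "AE x in M. mono (\<lambda>i. f (s i) x)"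
    proof (rule AE_I2)
      fix x :: real
      have ev: "0 \<le> x^(2*m+2)" by (rule zero_le_even_power) simp
      show "mono (\<lambda>i. f (s i) x)"
        unfolding mono_iff_le_Suc f_def
        by (intro allI mult_left_mono frac_mono ev) (simp_all add: s_def)
    qed
    show "AE x in M. 0 \<le> f (s i) x" for i
      unfolding f_def by (rule AE_I2, intro mult_nonneg_nonneg zero_le_even_power divide_nonneg_nonneg) auto
    show "AE x in M. (\<lambda>i. f (s i) x) \<longlonglongrightarrow> x^(2*m+2)"
    proof (rule AE_I2)
      fix x :: real
      have l0: "(\<lambda>i. x^2 / s i) \<longlonglongrightarrow> 0"
        by (rule tendsto_divide_0[OF tendsto_const filterlim_at_top_imp_at_infinity[OF s_top]])
      have l1: "(\<lambda>i. x^2 / (x^2 + (s i)^2)) \<longlonglongrightarrow> 0"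
      proof (rule Lim_null_comparison[OF _ l0])
        show "\<forall>\<^sub>F i in sequentially. norm (x^2 / (x^2 + (s i)^2)) \<le> x^2 / s i"
        proof (rule always_eventually, rule allI)
          fix i
          have si: "s i \<ge> 1" by (simp add: s_def)
          have "s i \<le> (s i)^2" using si by (simp add: power2_eq_square)
          moreover have "0 \<le> x^2" by simp
          ultimately have "s i \<le> x^2 + (s i)^2" by linarith
          then show "norm (x^2 / (x^2 + (s i)^2)) \<le> x^2 / s i"
            using si by (simp add: divide_left_mono add_nonneg_pos)
        qed
      qed
      have e: "f (s i) x = x^(2*m+2) * (1 - x^2 / (x^2 + (s i)^2))" for i
        unfolding f_def frac_id[OF spos] ..
      have "(\<lambda>i. x^(2*m+2) * (1 - x^2 / (x^2 + (s i)^2))) \<longlonglongrightarrow> x^(2*m+2) * (1 - 0)"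
        by (intro tendsto_intros l1)
      then show "(\<lambda>i. f (s i) x) \<longlonglongrightarrow> x^(2*m+2)" unfolding e by simp
    qed
    show "(\<lambda>i. integral\<^sup>L M (f (s i))) \<longlonglongrightarrow> b"
      by (rule filterlim_compose[OF flim s_top])
    show "(\<lambda>x. x^(2*m+2)) \<in> borel_measurable M"
      by (subst measurable_cong_sets[OF meas refl]) measurable
  qed
  then show ?case by simp
qed

lemma moment0: "real_prob_measure M \<Longrightarrow> moment M 0 = 1"
proof -
  assume M: "real_prob_measure M"
  interpret prob_space M using M by (simp add: real_prob_measure_def)
  show ?thesis unfolding moment_def power_0 lebesgue_integral_const prob_space by simp
qed

lemma c_inv_pow0: "d \<ge> 1 \<Longrightarrow> ((\<lambda>y::real. c / (\<i> * complex_of_real y)^d) \<longlongrightarrow> 0) at_top"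
proof -
  assume d: "d \<ge> 1"
  have "((\<lambda>y::real. c * (1 / (\<i> * complex_of_real y)^d)) \<longlongrightarrow> c * 0) at_top"
    by (intro tendsto_mult tendsto_const inv_pow0 d)
  then show ?thesis by simp
qed

theorem proposition4p9:
  fixes \<mu> \<nu> \<rho> :: "real measure" and n :: nat
  assumes "real_prob_measure \<mu>" and "real_prob_measure \<nu>"
    and "is_monotone_convolution \<mu> \<nu> \<rho>"
    and "n \<ge> 1"
    and "integrable \<mu> (\<lambda>x. x ^ (2 * n))" and "integrable \<nu> (\<lambda>x. x ^ (2 * n))"
  shows "integrable \<rho> (\<lambda>x. x ^ (2 * n)) \<and>
    (\<forall>l\<in>{1..2 * n}. moment \<rho> l = moment \<mu> l + moment \<nu> l +
       (\<Sum>k = 1..l - 1. \<Sum>js\<in>{js. length js = Suc k \<and> sum_list js = l - k}.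
          moment \<mu> k * prod_list (map (moment \<nu>) js)))"
proof -
  note Mu = assms(1) and Nu = assms(2) and conv = assms(3) and Imu = assms(5) and Inu = assms(6)
  have Rho: "real_prob_measure \<rho>" using conv by (simp add: is_monotone_convolution_def)
  define N where "N = 2*n"
  define z where "z y = \<i> * complex_of_real y" for y :: real
  define Gn where "Gn y = cauchy_transform \<nu> (z y)" for y
  define Gr where "Gr y = cauchy_transform \<rho> (z y)" for y
  define w where "w y = F_transform \<nu> (z y)" for y
  define q where "q y = 1 / (z y * Gn y)" for y
  have z0: "eventually (\<lambda>y. z y \<noteq> 0) at_top"
    by (rule eventually_mono[OF eventually_gt_at_top[of 0]]) (simp add: z_def)
  have Enu: "Exp Gn (moment \<nu>) N"
    using forward_Exp[OF Nu Inu] unfolding N_def Gn_def z_def .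
  have Enu_lim: "((\<lambda>y. (Gn y - (\<Sum>k\<le>N. of_real (moment \<nu> k) / (z y)^(k+1))) * (z y)^(N+1)) \<longlongrightarrow> 0) at_top"
    using Enu unfolding Exp_def z_def .
  have zG: "((\<lambda>y. z y * Gn y) \<longlongrightarrow> 1) at_top"
  proof -
    have "Exp Gn (moment \<nu>) 0" by (rule Exp_trunc[OF Enu]) simp
    then have l: "((\<lambda>y. (Gn y - of_real (moment \<nu> 0) / z y) * z y) \<longlongrightarrow> 0) at_top"
      unfolding Exp_def z_def by simp
    have "((\<lambda>y. (Gn y - of_real (moment \<nu> 0) / z y) * z y + 1) \<longlongrightarrow> 0 + 1) at_top"
      by (intro tendsto_add l tendsto_const)
    moreover have "eventually (\<lambda>y. (Gn y - of_real (moment \<nu> 0) / z y) * z y + 1 = z y * Gn y) at_top"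
      using z0 by eventually_elim (simp add: moment0[OF Nu] field_simps)
    ultimately show ?thesis using Lim_transform_eventually by fastforce
  qed
  have qlim: "(q \<longlongrightarrow> 1) at_top"
  proof -
    have "((\<lambda>y. 1 / (z y * Gn y)) \<longlongrightarrow> 1 / 1) at_top"
      by (intro tendsto_divide tendsto_const zG) simp
    then show ?thesis unfolding q_def by simp
  qed
  have wq: "w y = z y * q y" if "y > 0" for y
    using that by (simp add: w_def q_def F_transform_def Gn_def z_def)
  have qd: "eventually (\<lambda>y. dist (q y) 1 < 1/2) at_top" by (rule tendstoD[OF qlim]) simp
  have qev: "eventually (\<lambda>y. Re (q y) > 1/2 \<and> norm (q y) < 3/2 \<and> y > 0) at_top"
    using qd eventually_gt_at_top[of 0]
  proof eventually_elim
    case (elim y)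
    then have d: "norm (q y - 1) < 1/2" by (simp add: dist_norm)
    have "\<bar>Re (q y - 1)\<bar> \<le> norm (q y - 1)" by (rule abs_Re_le_cmod)
    then have "Re (q y) > 1/2" using d by simp
    moreover have "norm (q y) \<le> norm (q y - 1) + norm (1::complex)"
      using norm_triangle_ineq[of "q y - 1" 1] by simp
    ultimately show ?case using d elim by simp
  qed
  have Imw: "eventually (\<lambda>y. 1/2 * y \<le> Im (w y) \<and> norm (w y) \<le> 3 * Im (w y)) at_top"
    using qev
  proof eventually_elim
    case (elim y)
    then have y: "y > 0" by simp
    have im: "Im (w y) = y * Re (q y)" using wq[OF y] by (simp add: z_def)
    have nm: "norm (w y) = y * norm (q y)" using wq[OF y] y by (simp add: z_def norm_mult)
    have a: "1/2 * y \<le> Im (w y)" unfolding im using elim y by (simp add: mult_left_mono)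
    have "norm (w y) \<le> y * (3/2)" unfolding nm using elim y by (intro mult_left_mono) auto
    then show ?case using a by simp
  qed
  have wtop: "filterlim (\<lambda>y. Im (w y)) at_top at_top"
  proof (rule filterlim_at_top_mono)
    show "LIM y at_top. 1/2 * (y::real) :> at_top"
      by (rule filterlim_tendsto_pos_mult_at_top[OF tendsto_const _ filterlim_ident]) simp
    show "\<forall>\<^sub>F y in at_top. 1/2 * y \<le> Im (w y)" using Imw by (rule eventually_mono) simp
  qed
  have cone: "eventually (\<lambda>y. norm (w y) \<le> 3 * Im (w y)) at_top"
    using Imw by (rule eventually_mono) simp
  have Fm: "((\<lambda>y. (cauchy_transform \<mu> (w y) - (\<Sum>k\<le>N. of_real (moment \<mu> k) / (w y)^(k+1))) * (w y)^(N+1)) \<longlongrightarrow> 0) at_top"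
    using forward[OF Mu Imu wtop cone] unfolding N_def .
  have GrGm: "Gr y = cauchy_transform \<mu> (w y)" if y: "y > 0" for y
  proof -
    have "F_transform \<rho> (z y) = F_transform \<mu> (F_transform \<nu> (z y))"
      using conv y unfolding is_monotone_convolution_def by (simp add: z_def)
    then have "1 / F_transform \<rho> (z y) = 1 / F_transform \<mu> (w y)" by (simp add: w_def)
    then show ?thesis by (simp add: F_transform_def Gr_def)
  qed
  have wG: "of_real c / (w y)^(k+1) = of_real c * (Gn y)^(k+1)" for c k y
    unfolding w_def F_transform_def Gn_def power_one_over by simp
  have star: "((\<lambda>y. (Gr y - (\<Sum>k\<le>N. of_real (moment \<mu> k) * (Gn y)^(k+1))) * (z y)^(N+1)) \<longlongrightarrow> 0) at_top"
  proof -
    have l1: "((\<lambda>y. (1 / q y)^(N+1)) \<longlongrightarrow> (1/1)^(N+1)) at_top"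
      by (intro tendsto_power tendsto_divide tendsto_const qlim) simp
    have "((\<lambda>y. ((cauchy_transform \<mu> (w y) - (\<Sum>k\<le>N. of_real (moment \<mu> k) / (w y)^(k+1))) * (w y)^(N+1)) * (1 / q y)^(N+1)) \<longlongrightarrow> 0 * (1/1)^(N+1)) at_top"
      by (intro tendsto_mult Fm l1)
    then have l2: "((\<lambda>y. ((cauchy_transform \<mu> (w y) - (\<Sum>k\<le>N. of_real (moment \<mu> k) / (w y)^(k+1))) * (w y)^(N+1)) * (1 / q y)^(N+1)) \<longlongrightarrow> 0) at_top"
      by simp
    show ?thesis
    proof (rule Lim_transform_eventually[OF l2])
      show "\<forall>\<^sub>F y in at_top. ((cauchy_transform \<mu> (w y) - (\<Sum>k\<le>N. of_real (moment \<mu> k) / (w y)^(k+1))) * (w y)^(N+1)) * (1 / q y)^(N+1)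
          = (Gr y - (\<Sum>k\<le>N. of_real (moment \<mu> k) * (Gn y)^(k+1))) * (z y)^(N+1)"
        using qev
      proof eventually_elim
        case (elim y)
        then have y: "y > 0" and q0: "q y \<noteq> 0" by auto
        have "(w y)^(N+1) * (1 / q y)^(N+1) = (z y * q y * (1 / q y))^(N+1)"
          unfolding wq[OF y] by (simp only: power_mult_distrib)
        also have "z y * q y * (1 / q y) = z y" using q0 by simp
        finally have "(w y)^(N+1) * (1 / q y)^(N+1) = (z y)^(N+1)" .
        then show ?case by (simp only: GrGm[OF y] wG mult.assoc)
      qed
    qed
  qed
  define Pn where "Pn y = (\<Sum>j\<le>N. of_real (moment \<nu> j) / (z y)^(j+1))" for y
  have EP: "((\<lambda>y. (Gn y - Pn y) * (z y)^(N+1)) \<longlongrightarrow> 0) at_top"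
    using Enu_lim unfolding Pn_def .
  have zinv: "((\<lambda>y. 1 / z y) \<longlongrightarrow> 0) at_top" using inv_i_0 unfolding z_def .
  have Gn0: "(Gn \<longlongrightarrow> 0) at_top"
  proof -
    have "((\<lambda>y. (z y * Gn y) * (1 / z y)) \<longlongrightarrow> 1 * 0) at_top"
      by (intro tendsto_mult zG zinv)
    moreover have "eventually (\<lambda>y. (z y * Gn y) * (1 / z y) = Gn y) at_top"
      using z0 by eventually_elim simp
    ultimately show ?thesis using Lim_transform_eventually by fastforce
  qed
  have Pn0: "(Pn \<longlongrightarrow> 0) at_top"
  proof -
    have "((\<lambda>y. \<Sum>j\<le>N. of_real (moment \<nu> j) / (z y)^(j+1)) \<longlongrightarrow> (\<Sum>j\<le>N. 0)) at_top"
      unfolding z_def by (intro tendsto_sum c_inv_pow0) simp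
    then show ?thesis unfolding Pn_def by simp
  qed
  have Dk: "((\<lambda>y. ((Gn y)^(k+1) - (Pn y)^(k+1)) * (z y)^(N+1)) \<longlongrightarrow> 0) at_top" for k
  proof -
    have L: "((\<lambda>y. ((Gn y - Pn y) * (z y)^(N+1)) * (\<Sum>i<k+1. (Pn y)^(k+1 - Suc i) * (Gn y)^i))
        \<longlongrightarrow> 0 * (\<Sum>i<k+1. 0^(k+1 - Suc i) * 0^i)) at_top"
      by (intro tendsto_mult EP tendsto_sum tendsto_power Pn0 Gn0)
    have eq: "((Gn y - Pn y) * (z y)^(N+1)) * (\<Sum>i<k+1. (Pn y)^(k+1 - Suc i) * (Gn y)^i)
        = ((Gn y)^(k+1) - (Pn y)^(k+1)) * (z y)^(N+1)" for y
      unfolding power_diff_sumr2[of "Gn y" "k+1" "Pn y"] by (simp only: ac_simps)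
    show ?thesis using L unfolding eq mult_zero_left .
  qed
  have star2: "((\<lambda>y. (Gr y - (\<Sum>k\<le>N. of_real (moment \<mu> k) * (Pn y)^(k+1))) * (z y)^(N+1)) \<longlongrightarrow> 0) at_top"
  proof -
    have "((\<lambda>y. (Gr y - (\<Sum>k\<le>N. of_real (moment \<mu> k) * (Gn y)^(k+1))) * (z y)^(N+1)
        + (\<Sum>k\<le>N. of_real (moment \<mu> k) * (((Gn y)^(k+1) - (Pn y)^(k+1)) * (z y)^(N+1)))) \<longlongrightarrow> 0 + (\<Sum>k\<le>N. of_real (moment \<mu> k) * 0)) at_top"
      by (intro tendsto_add star tendsto_sum tendsto_mult tendsto_const Dk)
    moreover have "(Gr y - (\<Sum>k\<le>N. of_real (moment \<mu> k) * (Gn y)^(k+1))) * (z y)^(N+1)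
        + (\<Sum>k\<le>N. of_real (moment \<mu> k) * (((Gn y)^(k+1) - (Pn y)^(k+1)) * (z y)^(N+1)))
        = (Gr y - (\<Sum>k\<le>N. of_real (moment \<mu> k) * (Pn y)^(k+1))) * (z y)^(N+1)" for y
    proof -
      have "(\<Sum>k\<le>N. of_real (moment \<mu> k) * (((Gn y)^(k+1) - (Pn y)^(k+1)) * (z y)^(N+1)))
         = ((\<Sum>k\<le>N. of_real (moment \<mu> k) * (Gn y)^(k+1)) - (\<Sum>k\<le>N. of_real (moment \<mu> k) * (Pn y)^(k+1))) * (z y)^(N+1)"
      proof -
        have "(\<Sum>k\<le>N. of_real (moment \<mu> k) * (((Gn y)^(k+1) - (Pn y)^(k+1)) * (z y)^(N+1)))
          = (\<Sum>k\<le>N. (of_real (moment \<mu> k) * (Gn y)^(k+1) - of_real (moment \<mu> k) * (Pn y)^(k+1)) * (z y)^(N+1))"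
          by (intro sum.cong refl) (simp add: algebra_simps)
        also have "\<dots> = (\<Sum>k\<le>N. of_real (moment \<mu> k) * (Gn y)^(k+1) - of_real (moment \<mu> k) * (Pn y)^(k+1)) * (z y)^(N+1)"
          by (rule sum_distrib_right[symmetric])
        also have "\<dots> = ((\<Sum>k\<le>N. of_real (moment \<mu> k) * (Gn y)^(k+1)) - (\<Sum>k\<le>N. of_real (moment \<mu> k) * (Pn y)^(k+1))) * (z y)^(N+1)"
          by (simp only: sum_subtractf)
        finally show ?thesis .
      qed
      then show ?thesis by (simp add: algebra_simps)
    qed
    ultimately show ?thesis by simp
  qed
  define R where "R = Rp N (moment \<mu>) (moment \<nu>)"
  define a where "a l = (\<Sum>k\<le>l. moment \<mu> k * (\<Sum>js\<in>LS (Suc k) (l-k). prod_list (map (moment \<nu>) js)))" for l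
  define Dg where "Dg = N + 1 + degree R"
  define Tl where "Tl y = (\<Sum>d\<in>{Suc N<..Dg}. coeff R d * (1 / z y)^d)" for y
  have PR: "poly R (1 / z y) = (\<Sum>k\<le>N. of_real (moment \<mu> k) * (Pn y)^(k+1))" if zy: "z y \<noteq> 0" for y
  proof -
    define t where "t = 1 / z y"
    have pQ: "poly (Qp N (moment \<nu>)) t = (\<Sum>j\<le>N. of_real (moment \<nu> j) * t^j)"
      by (simp add: Qp_def poly_sum poly_monom)
    have PnQ: "Pn y = t * poly (Qp N (moment \<nu>)) t"
    proof -
      have "Pn y = (\<Sum>j\<le>N. of_real (moment \<nu> j) * t^(j+1))"
        unfolding Pn_def t_def by (simp add: power_one_over)
      also have "\<dots> = t * (\<Sum>j\<le>N. of_real (moment \<nu> j) * t^j)"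
        by (simp add: sum_distrib_left mult_ac)
      finally show ?thesis unfolding pQ .
    qed
    show ?thesis unfolding t_def[symmetric] R_def Rp_def PnQ
      by (simp add: poly_sum poly_monom power_mult_distrib mult_ac)
  qed
  have polyR: "poly R t = (\<Sum>d\<le>Dg. coeff R d * t^d)" for t
  proof -
    have "poly R t = poly (\<Sum>i\<le>Dg. monom (coeff R i) i) t"
      by (subst poly_as_sum_of_monoms') (simp_all add: Dg_def)
    then show ?thesis by (simp add: poly_sum poly_monom)
  qed
  have split: "(\<Sum>d\<le>Dg. coeff R d * t^d) = (\<Sum>k\<le>N. of_real (a k) * t^(k+1)) + (\<Sum>d\<in>{Suc N<..Dg}. coeff R d * t^d)" for t
  proof -
    have un: "{..Dg} = {..Suc N} \<union> {Suc N<..Dg}" by (auto simp: Dg_def)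
    have "(\<Sum>d\<le>Dg. coeff R d * t^d) = (\<Sum>d\<le>Suc N. coeff R d * t^d) + (\<Sum>d\<in>{Suc N<..Dg}. coeff R d * t^d)"
      unfolding un by (rule sum.union_disjoint) auto
    also have "(\<Sum>d\<le>Suc N. coeff R d * t^d) = coeff R 0 * t^0 + (\<Sum>k\<le>N. coeff R (Suc k) * t^(Suc k))"
      unfolding atMost_atLeast0 sum.atLeast0_atMost_Suc_shift by simp
    also have "\<dots> = (\<Sum>k\<le>N. of_real (a k) * t^(k+1))"
    proof -
      have "coeff R 0 = 0" unfolding R_def by (rule coeff_R(1))
      moreover have "coeff R (Suc k) = of_real (a k)" if "k \<le> N" for k
        using coeff_R(2)[OF that, of "moment \<mu>" "moment \<nu>"] unfolding R_def a_def by simp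
      ultimately show ?thesis by simp
    qed
    finally show ?thesis .
  qed
  have Tl0: "((\<lambda>y. Tl y * (z y)^(N+1)) \<longlongrightarrow> 0) at_top"
  proof -
    have "((\<lambda>y. \<Sum>d\<in>{Suc N<..Dg}. coeff R d / (\<i> * complex_of_real y)^(d - (N+1))) \<longlongrightarrow> (\<Sum>d\<in>{Suc N<..Dg}. 0)) at_top"
      by (intro tendsto_sum c_inv_pow0) auto
    moreover have "eventually (\<lambda>y. (\<Sum>d\<in>{Suc N<..Dg}. coeff R d / (\<i> * complex_of_real y)^(d - (N+1))) = Tl y * (z y)^(N+1)) at_top"
      using z0
    proof eventually_elim
      case (elim y)
      have "coeff R d / (z y)^(d - (N+1)) = coeff R d * (1 / z y)^d * (z y)^(N+1)" if "d \<in> {Suc N<..Dg}" for d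
      proof -
        have "(z y)^d = (z y)^(d - (N+1)) * (z y)^(N+1)"
          unfolding power_add[symmetric] using that by simp
        then show ?thesis using elim by (simp add: power_one_over)
      qed
      then show ?case unfolding Tl_def sum_distrib_right z_def[symmetric] by (intro sum.cong) auto
    qed
    ultimately show ?thesis using Lim_transform_eventually by fastforce
  qed
  have Er: "Exp (\<lambda>y. cauchy_transform \<rho> (\<i> * complex_of_real y)) a N"
  proof -
    have "((\<lambda>y. (Gr y - (\<Sum>k\<le>N. of_real (moment \<mu> k) * (Pn y)^(k+1))) * (z y)^(N+1) + Tl y * (z y)^(N+1)) \<longlongrightarrow> 0 + 0) at_top"
      by (intro tendsto_add star2 Tl0)
    moreover have "eventually (\<lambda>y. (Gr y - (\<Sum>k\<le>N. of_real (moment \<mu> k) * (Pn y)^(k+1))) * (z y)^(N+1) + Tl y * (z y)^(N+1)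
        = (Gr y - (\<Sum>k\<le>N. of_real (a k) / (z y)^(k+1))) * (z y)^(N+1)) at_top"
      using z0
    proof eventually_elim
      case (elim y)
      have "(\<Sum>k\<le>N. of_real (moment \<mu> k) * (Pn y)^(k+1)) = (\<Sum>k\<le>N. of_real (a k) / (z y)^(k+1)) + Tl y"
        unfolding PR[OF elim, symmetric] polyR split Tl_def by (simp add: power_one_over)
      then show ?case by (simp add: algebra_simps)
    qed
    ultimately have "((\<lambda>y. (Gr y - (\<Sum>k\<le>N. of_real (a k) / (z y)^(k+1))) * (z y)^(N+1)) \<longlongrightarrow> 0) at_top"
      using Lim_transform_eventually by fastforce
    then show ?thesis unfolding Exp_def Gr_def z_def .
  qed
  have Irho: "integrable \<rho> (\<lambda>x. x ^ (2 * n))"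
    using converse_int[OF Rho Er[unfolded N_def], of n] by simp
  have meq: "moment \<rho> l = a l" if "l \<le> 2*n" for l
    using moments_eq[OF Rho Er Irho _ that] unfolding N_def by simp
  show ?thesis
  proof (intro conjI ballI Irho)
    fix l assume l: "l \<in> {1..2*n}"
    show "moment \<rho> l = moment \<mu> l + moment \<nu> l +
       (\<Sum>k = 1..l - 1. \<Sum>js\<in>{js. length js = Suc k \<and> sum_list js = l - k}.
          moment \<mu> k * prod_list (map (moment \<nu>) js))"
      using meq[of l] l final_formula[where mu="moment \<mu>" and nu="moment \<nu>" and l=l, OF moment0[OF Mu] moment0[OF Nu]]
      by (simp add: a_def)
  qed
qed

end
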